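(* Let $\mathscr{H}$ be a complex Hilbert space, let $X,Y\in\mathbb{B}(\mathscr{H})$ and let $0\leq\alpha\leq1$, $0\leq\beta\leq1$. Then for every $x\in\mathscr{H}$ with $\|x\|=1$, $$|\langle Xx,x\rangle\langle Yx,x\rangle|\leq\frac{1}{4}\left\|\alpha|X|^2+(1-\alpha)|X^*|^2+\beta|Y|^2+(1-\beta)|Y^*|^2\right\|+\frac{1}{8}\left\||X|^2+|Y^*|^2\right\|+\frac{1}{4}\,w(YX).$$
   Context: $\mathbb{B}(\mathscr{H})$ denotes the algebra of bounded linear operators on $\mathscr{H}$; $\|\cdot\|$ is the operator norm. For $T\in\mathbb{B}(\mathscr{H})$, $|T|=(T^*T)^{1/2}$, and $w(T)=\sup\{|\langle Tx,x\rangle|: \|x\|=1\}$ is the numerical radius. *)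

theory Defs
  imports "HOL-Analysis.Analysis"
begin

class complex_inner = real_normed_vector +
  fixes scaleC :: "complex \<Rightarrow> 'a \<Rightarrow> 'a"
    and cinner :: "'a \<Rightarrow> 'a \<Rightarrow> complex"
  assumes scaleC_of_real: "scaleC (of_real r) x = scaleR r x"
    and scaleC_add_right: "scaleC c (x + y) = scaleC c x + scaleC c y"
    and scaleC_add_left: "scaleC (c + d) x = scaleC c x + scaleC d x"
    and scaleC_scaleC: "scaleC c (scaleC d x) = scaleC (c * d) x"
    and scaleC_one: "scaleC 1 x = x"
    and cinner_add_left: "cinner (x + y) z = cinner x z + cinner y z"
    and cinner_scaleC_left: "cinner (scaleC c x) y = c * cinner x y"
    and cinner_commute: "cinner y x = cnj (cinner x y)"
    and norm_eq_sqrt_cinner: "norm x = sqrt (Re (cinner x x))"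

class chilbert = complex_inner + complete_space

definition bounded_clinear :: "('a::complex_inner \<Rightarrow> 'a) \<Rightarrow> bool" where
  "bounded_clinear T \<longleftrightarrow> bounded_linear T \<and> (\<forall>c x. T (scaleC c x) = scaleC c (T x))"

definition adj :: "('a::complex_inner \<Rightarrow> 'a) \<Rightarrow> ('a \<Rightarrow> 'a)" where
  "adj T = (SOME S. bounded_clinear S \<and> (\<forall>x y. cinner (T x) y = cinner x (S y)))"

definition numrad :: "('a::complex_inner \<Rightarrow> 'a) \<Rightarrow> real" where
  "numrad T = (SUP x\<in>{x. norm x = 1}. cmod (cinner (T x) x))"

end

theory Submission
  imports Defs
begin

lemma scaleC_zero_left [simp]: "scaleC 0 (x::'a::complex_inner) = 0"
  using scaleC_of_real[of 0 x] by simp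

lemma scaleC_zero_right [simp]: "scaleC c (0::'a::complex_inner) = 0"
  using scaleC_add_right[of c "0::'a" 0] by simp

lemma scaleC_minus_right: "scaleC c (- x::'a::complex_inner) = - scaleC c x"
proof -
  have "scaleC c x + scaleC c (-x) = 0" using scaleC_add_right[of c x "-x"] by simp
  from minus_unique[OF this] show ?thesis by simp
qed

lemma scaleC_diff_right: "scaleC c (x - y::'a::complex_inner) = scaleC c x - scaleC c y"
  by (metis diff_conv_add_uminus scaleC_add_right scaleC_minus_right)

lemma scaleC_minus_left: "scaleC (- c) (x::'a::complex_inner) = - scaleC c x"
proof -
  have "scaleC c x + scaleC (-c) x = 0" using scaleC_add_left[of c "-c" x] by simp
  from minus_unique[OF this] show ?thesis by simp
qed

lemma scaleC_diff_left: "scaleC (c - d) (x::'a::complex_inner) = scaleC c x - scaleC d x"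
  by (metis diff_conv_add_uminus scaleC_add_left scaleC_minus_left)

lemma scaleR_scaleC: "scaleR r (x::'a::complex_inner) = scaleC (of_real r) x"
  by (simp add: scaleC_of_real)

lemma cinner_zero_left [simp]: "cinner (0::'a::complex_inner) y = 0"
  using cinner_add_left[of "0::'a" 0 y] by simp

lemma cinner_minus_left: "cinner (- x::'a::complex_inner) y = - cinner x y"
proof -
  have "cinner x y + cinner (-x) y = 0" using cinner_add_left[of x "-x" y] by simp
  from minus_unique[OF this] show ?thesis by simp
qed

lemma cinner_diff_left: "cinner (x - y::'a::complex_inner) z = cinner x z - cinner y z"
  by (metis diff_conv_add_uminus cinner_add_left cinner_minus_left)

lemma cinner_add_right: "cinner (x::'a::complex_inner) (y + z) = cinner x y + cinner x z"
  by (metis cinner_commute cinner_add_left complex_cnj_add)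

lemma cinner_zero_right [simp]: "cinner (x::'a::complex_inner) 0 = 0"
  by (metis cinner_commute cinner_zero_left complex_cnj_zero)

lemma cinner_diff_right: "cinner (x::'a::complex_inner) (y - z) = cinner x y - cinner x z"
  by (metis cinner_commute cinner_diff_left complex_cnj_diff)

lemma cinner_scaleC_right: "cinner (x::'a::complex_inner) (scaleC c y) = cnj c * cinner x y"
  by (metis cinner_commute cinner_scaleC_left complex_cnj_mult complex_cnj_cnj)

lemma cinner_scaleR_left: "cinner (scaleR r x::'a::complex_inner) y = of_real r * cinner x y"
  by (simp add: scaleR_scaleC cinner_scaleC_left)

lemma cinner_self: "cinner (x::'a::complex_inner) x = of_real ((norm x)^2)"
proof -
  have im: "Im (cinner x x) = 0"
    using arg_cong[where f=Im, OF cinner_commute[of x x]] by simp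
  have "sqrt (Re (cinner x x)) \<ge> 0" using norm_eq_sqrt_cinner[of x] by (metis norm_ge_zero)
  hence "Re (cinner x x) \<ge> 0" by simp
  hence "Re (cinner x x) = (norm x)^2" using norm_eq_sqrt_cinner[of x] by simp
  with im show ?thesis by (simp add: complex_eq_iff)
qed

lemma Re_cinner_self: "Re (cinner (x::'a::complex_inner) x) = (norm x)^2"
  by (simp add: cinner_self)

lemma norm_diff_scaleC_sq:
  "(norm (x - scaleC a y::'a::complex_inner))^2
     = (norm x)^2 - 2 * Re (a * cinner y x) + (cmod a)^2 * (norm y)^2"
proof -
  have "cinner (x - scaleC a y) (x - scaleC a y)
     = cinner x x - cnj a * cinner x y - a * cinner y x + a * cnj a * cinner y y"
    by (simp add: cinner_diff_left cinner_diff_right cinner_scaleC_left cinner_scaleC_right algebra_simps)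
  hence "Re (cinner (x - scaleC a y) (x - scaleC a y))
     = Re (cinner x x) - Re (cnj a * cinner x y) - Re (a * cinner y x) + Re (a * cnj a * cinner y y)"
    by simp
  moreover have "Re (cnj a * cinner x y) = Re (a * cinner y x)"
    by (metis cnj.sel(1) cinner_commute complex_cnj_mult complex_cnj_cnj)
  moreover have "Re (a * cnj a * cinner y y) = (cmod a)^2 * (norm y)^2"
    by (metis cinner_self complex_norm_square Re_complex_of_real of_real_mult)
  ultimately show ?thesis by (simp add: Re_cinner_self)
qed

lemma cauchy_schwarz: "cmod (cinner (x::'a::complex_inner) y) \<le> norm x * norm y"
proof (cases "y = 0")
  case True thus ?thesis by simp
next
  case False
  let ?c = "cinner x y"
  define a where "a = ?c / of_real ((norm y)^2)"
  have ny: "norm y > 0" using False by simp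
  have "0 \<le> (norm (x - scaleC a y))^2" by simp
  also have "\<dots> = (norm x)^2 - 2 * Re (a * cinner y x) + (cmod a)^2 * (norm y)^2"
    by (rule norm_diff_scaleC_sq)
  also have "a * cinner y x = of_real ((cmod ?c)^2 / (norm y)^2)"
    unfolding a_def using cinner_commute[of y x] complex_norm_square[of ?c]
    by (simp add: field_simps)
  also have "cmod a = cmod ?c / (norm y)^2"
    unfolding a_def by (simp add: norm_divide norm_power)
  finally have h: "0 \<le> (norm x)^2 - 2 * ((cmod ?c)^2 / (norm y)^2) + (cmod ?c / (norm y)^2)^2 * (norm y)^2"
    by simp
  have m: "(q / m)^2 * m = q^2 / m" if "m > 0" for q m :: real
    using that by (simp add: power2_eq_square field_simps)
  have "(cmod ?c / (norm y)^2)^2 * (norm y)^2 = (cmod ?c)^2 / (norm y)^2"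
    by (rule m) (use ny in simp)
  with h have "(cmod ?c)^2 / (norm y)^2 \<le> (norm x)^2" by argo
  hence "(cmod ?c)^2 \<le> (norm x)^2 * (norm y)^2"
    using ny by (simp add: pos_divide_le_eq)
  hence "(cmod ?c)^2 \<le> (norm x * norm y)^2" by (simp add: power_mult_distrib)
  thus ?thesis by (simp add: power2_le_iff_abs_le)
qed


lemma buzano:
  fixes u v e :: "'a::complex_inner"
  assumes "norm e = 1"
  shows "cmod (cinner u e * cinner e v) \<le> (norm u * norm v + cmod (cinner u v)) / 2"
proof -
  let ?c = "cinner u e"
  define w where "w = u - scaleC (2 * ?c) e"
  have "(norm w)^2 = (norm u)^2 - 2 * Re (2 * ?c * cinner e u) + (cmod (2 * ?c))^2 * (norm e)^2"
    unfolding w_def by (rule norm_diff_scaleC_sq)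
  also have "2 * ?c * cinner e u = of_real (2 * (cmod ?c)^2)"
    using cinner_commute[of e u] complex_norm_square[of ?c] by simp
  finally have "(norm w)^2 = (norm u)^2" using assms by (simp add: power_mult_distrib)
  hence nw: "norm w = norm u" by (simp add: power2_eq_iff_nonneg)
  have "cinner w v = cinner u v - 2 * (?c * cinner e v)"
    unfolding w_def by (simp add: cinner_diff_left cinner_scaleC_left)
  hence "2 * (?c * cinner e v) = cinner u v - cinner w v" by simp
  hence "cmod (2 * (?c * cinner e v)) \<le> cmod (cinner u v) + cmod (cinner w v)"
    by (metis norm_triangle_ineq4)
  also have "cmod (cinner w v) \<le> norm u * norm v" using cauchy_schwarz[of w v] nw by simp
  finally show ?thesis by (simp add: norm_mult)
qed

lemma cinner_ext:
  fixes a b :: "'a::complex_inner"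
  assumes "\<And>x. cinner x a = cinner x b"
  shows "a = b"
proof -
  have "cinner (a - b) (a - b) = 0" using assms[of "a - b"] by (simp add: cinner_diff_right)
  hence "norm (a - b) = 0" by (simp add: cinner_self)
  thus ?thesis by simp
qed

lemma parallelogram:
  fixes x y :: "'a::complex_inner"
  shows "(norm (x - y))^2 + (norm (x + y))^2 = 2 * (norm x)^2 + 2 * (norm y)^2"
proof -
  have "cinner (x - y) (x - y) + cinner (x + y) (x + y) = 2 * cinner x x + 2 * cinner y y"
    by (simp add: cinner_diff_left cinner_diff_right cinner_add_left cinner_add_right)
  hence "Re (cinner (x - y) (x - y) + cinner (x + y) (x + y)) = Re (2 * cinner x x + 2 * cinner y y)"
    by (rule arg_cong)
  thus ?thesis by (simp add: Re_cinner_self)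
qed


lemma riesz:
  fixes f :: "'a::chilbert \<Rightarrow> complex"
  assumes add: "\<And>x y. f (x + y) = f x + f y"
    and mul: "\<And>c x. f (scaleC c x) = c * f x"
    and bnd: "\<And>x. cmod (f x) \<le> norm x * K"
  shows "\<exists>z. \<forall>x. f x = cinner x z"
proof (cases "\<forall>x. f x = 0")
  case True thus ?thesis by (intro exI[of _ 0]) simp
next
  case False
  then obtain u where fu: "f u \<noteq> 0" by blast
  have f0: "f 0 = 0" using add[of 0 0] by simp
  have fdiff: "f (u - v) = f u - f v" for u v using add[of "u - v" v] by simp
  have fR: "f (r *\<^sub>R x) = r *\<^sub>R f x" for r x
    by (simp add: scaleR_scaleC mul scaleR_conv_of_real)
  have bl: "bounded_linear f"
    by (rule bounded_linear_intro[OF add fR bnd])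
  define M where "M = {w. f w = 1}"
  have uM: "scaleC (1 / f u) u \<in> M" using fu by (simp add: M_def mul)
  hence Mne: "norm ` M \<noteq> {}" by blast
  have bdd: "bdd_below (norm ` M)" by (rule bdd_belowI[of _ 0]) auto
  define d where "d = Inf (norm ` M)"
  have dlow: "d \<le> norm w" if "w \<in> M" for w
    unfolding d_def using bdd that by (simp add: cInf_lower)
  have d0: "0 \<le> d" unfolding d_def using Mne by (intro cInf_greatest) auto
  have "\<exists>w. w \<in> M \<and> (norm w)^2 < d^2 + inverse (real (Suc n))" for n
  proof -
    have "d^2 < d^2 + inverse (real (Suc n))" by simp
    hence "sqrt (d^2) < sqrt (d^2 + inverse (real (Suc n)))" by (simp only: real_sqrt_less_iff)
    hence "d < sqrt (d^2 + inverse (real (Suc n)))" using d0 by simp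
    then obtain w where wM: "w \<in> M" and h: "norm w < sqrt (d^2 + inverse (real (Suc n)))"
      using cInf_lessD[OF Mne] unfolding d_def by auto
    have "(norm w)^2 < (sqrt (d^2 + inverse (real (Suc n))))^2"
      by (rule power_strict_mono[OF h norm_ge_zero]) simp
    hence "(norm w)^2 < d^2 + inverse (real (Suc n))" by simp
    thus ?thesis using wM by blast
  qed
  then obtain w where wM: "\<And>n. w n \<in> M" and wn: "\<And>n. (norm (w n))^2 < d^2 + inverse (real (Suc n))"
    by metis
  have "Cauchy w"
  proof (unfold Cauchy_def, intro allI impI)
    fix e :: real assume e: "0 < e"
    obtain N where N: "inverse (real (Suc N)) < e^2 / 4" using e
      using reals_Archimedean[of "e^2/4"] by auto
    have "dist (w m) (w n) < e" if "m \<ge> N" "n \<ge> N" for m n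
    proof -
      have "(1/2::real) *\<^sub>R (w m + w n) \<in> M" using wM[of m] wM[of n]
        by (simp add: M_def fR add scaleR_conv_of_real)
      hence "d \<le> norm ((1/2::real) *\<^sub>R (w m + w n))" by (rule dlow)
      hence "2 * d \<le> norm (w m + w n)" by simp
      hence s: "4 * d^2 \<le> (norm (w m + w n))^2" using d0
      proof -
        have "(2 * d)^2 \<le> (norm (w m + w n))^2"
          by (rule power_mono[OF \<open>2 * d \<le> norm (w m + w n)\<close>]) (use d0 in simp)
        thus ?thesis by (simp add: power_mult_distrib)
      qed
      have im: "inverse (real (Suc m)) \<le> inverse (real (Suc N))" using that by (simp add: le_imp_inverse_le)
      have inn: "inverse (real (Suc n)) \<le> inverse (real (Suc N))" using that by (simp add: le_imp_inverse_le)
      have "(norm (w m - w n))^2 = 2 * (norm (w m))^2 + 2 * (norm (w n))^2 - (norm (w m + w n))^2"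
        using parallelogram[of "w m" "w n"] by simp
      also have "\<dots> < e^2" using wn[of m] wn[of n] s im inn N by argo
      finally have "(norm (w m - w n))^2 < e^2" .
      hence "norm (w m - w n) < e" using e by (simp add: power_less_imp_less_base)
      thus ?thesis by (simp add: dist_norm)
    qed
    thus "\<exists>M. \<forall>m\<ge>M. \<forall>n\<ge>M. dist (w m) (w n) < e" by blast
  qed
  then obtain w0 where lim: "w \<longlonglongrightarrow> w0" using Cauchy_convergent convergent_def by blast
  have "(\<lambda>n. f (w n)) \<longlonglongrightarrow> f w0" using bounded_linear.tendsto[OF bl lim] .
  moreover have "(\<lambda>n. f (w n)) = (\<lambda>n. 1)" using wM by (simp add: M_def)
  ultimately have fw0: "f w0 = 1" using LIMSEQ_unique tendsto_const by metis
  hence w0M: "w0 \<in> M" by (simp add: M_def)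
  have l1: "(\<lambda>n. (norm (w n))^2) \<longlonglongrightarrow> (norm w0)^2" by (intro tendsto_intros lim)
  have l2: "(\<lambda>n. d^2 + inverse (real (Suc n))) \<longlonglongrightarrow> d^2 + 0"
    by (intro tendsto_intros LIMSEQ_inverse_real_of_nat)
  have "(norm w0)^2 \<le> d^2 + 0"
    by (rule LIMSEQ_le[OF l1 l2]) (intro exI[of _ 0] allI impI less_imp_le wn)
  hence "(norm w0)^2 \<le> d^2" by (simp only: add_0_right)
  hence "norm w0 \<le> d" by (rule power2_le_imp_le[OF _ d0])
  hence minimal: "\<And>v. v \<in> M \<Longrightarrow> norm w0 \<le> norm v" using dlow by force
  have orth: "cinner k w0 = 0" if fk: "f k = 0" for k
  proof -
    let ?c = "cinner k w0"
    define s where "s = 1 / ((norm k)^2 + 1)"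
    have p1: "0 < (norm k)^2 + 1" by (rule add_nonneg_pos) simp_all
    have s0: "s > 0" unfolding s_def using p1 by simp
    have sk: "s * (norm k)^2 < 1" unfolding s_def using p1 by (simp add: pos_divide_less_eq)
    define a where "a = of_real s * cnj ?c"
    have "w0 - scaleC a k \<in> M" using fw0 fk
      by (simp add: M_def fdiff mul)
    hence "(norm w0)^2 \<le> (norm (w0 - scaleC a k))^2" using minimal by (simp add: power_mono)
    also have "\<dots> = (norm w0)^2 - 2 * Re (a * ?c) + (cmod a)^2 * (norm k)^2"
      by (rule norm_diff_scaleC_sq)
    also have "a * ?c = of_real (s * (cmod ?c)^2)"
      unfolding a_def using complex_norm_square[of ?c] by (simp add: mult.commute mult.left_commute)
    also have "cmod a = s * cmod ?c" unfolding a_def using s0 by (simp add: norm_mult)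
    finally have "0 \<le> (cmod ?c)^2 * s * (s * (norm k)^2 - 2)"
      by (simp add: algebra_simps power_mult_distrib power2_eq_square)
    moreover have F: "s * (norm k)^2 - 2 < 0" using sk by simp
    moreover have "(cmod ?c)^2 * s \<ge> 0" using s0 by simp
    ultimately have "(cmod ?c)^2 * s * (s * (norm k)^2 - 2) = 0"
      by (meson antisym less_imp_le mult_nonneg_nonpos)
    hence "(cmod ?c)^2 * s = 0" using F by simp
    thus ?thesis using s0 by simp
  qed
  have nw0: "norm w0 \<noteq> 0" using fw0 f0 by auto
  define z where "z = scaleC (1 / of_real ((norm w0)^2)) w0"
  have "f x = cinner x z" for x
  proof -
    have "f (x - scaleC (f x) w0) = 0"
      using fw0 by (simp add: fdiff mul)
    hence "cinner (x - scaleC (f x) w0) w0 = 0" by (rule orth)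
    hence "cinner x w0 = f x * of_real ((norm w0)^2)"
      by (simp add: cinner_diff_left cinner_scaleC_left cinner_self)
    thus ?thesis unfolding z_def using nw0 by (simp add: cinner_scaleC_right)
  qed
  thus ?thesis by blast
qed


lemma adj_exists:
  fixes T :: "'a::chilbert \<Rightarrow> 'a"
  assumes T: "bounded_clinear T"
  shows "\<exists>S. bounded_clinear S \<and> (\<forall>x y. cinner (T x) y = cinner x (S y))"
proof -
  have blT: "bounded_linear T" and TC: "\<And>c x. T (scaleC c x) = scaleC c (T x)"
    using T unfolding bounded_clinear_def by auto
  obtain K where K0: "K \<ge> 0" and K: "\<And>x. norm (T x) \<le> norm x * K"
    using bounded_linear.nonneg_bounded[OF blT] by blast
  interpret TL: bounded_linear T by (rule blT)
  have Tadd: "T (x + y) = T x + T y" for x y by (rule TL.add)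
  have "\<exists>z. \<forall>x. cinner (T x) y = cinner x z" for y
  proof (rule riesz[where K = "K * norm y"])
    show "cinner (T (x + x')) y = cinner (T x) y + cinner (T x') y" for x x'
      by (simp add: Tadd cinner_add_left)
    show "cinner (T (scaleC c x)) y = c * cinner (T x) y" for c x
      by (simp add: TC cinner_scaleC_left)
    show "cmod (cinner (T x) y) \<le> norm x * (K * norm y)" for x
    proof -
      have "cmod (cinner (T x) y) \<le> norm (T x) * norm y" by (rule cauchy_schwarz)
      also have "\<dots> \<le> norm x * K * norm y" using K[of x] by (simp add: mult_right_mono)
      finally show ?thesis by (simp add: mult.assoc)
    qed
  qed
  then obtain S where S: "\<And>x y. cinner (T x) y = cinner x (S y)" by metis
  have Sadd: "S (a + b) = S a + S b" for a b
    by (rule cinner_ext) (simp add: S[symmetric] cinner_add_right)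
  have SC: "S (scaleC c a) = scaleC c (S a)" for c a
    by (rule cinner_ext) (simp add: S[symmetric] cinner_scaleC_right)
  have SR: "S (r *\<^sub>R a) = r *\<^sub>R S a" for r a
    by (simp add: scaleR_scaleC SC)
  have Sb: "norm (S y) \<le> norm y * K" for y
  proof (cases "S y = 0")
    case True thus ?thesis using K0 by simp
  next
    case False
    have "(norm (S y))^2 = Re (cinner (T (S y)) y)" by (simp add: S Re_cinner_self)
    also have "\<dots> \<le> cmod (cinner (T (S y)) y)" by (rule complex_Re_le_cmod)
    also have "\<dots> \<le> norm (T (S y)) * norm y" by (rule cauchy_schwarz)
    also have "\<dots> \<le> norm (S y) * K * norm y" using K[of "S y"] by (simp add: mult_right_mono)
    finally have "norm (S y) * norm (S y) \<le> norm (S y) * (norm y * K)"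
      by (simp add: power2_eq_square algebra_simps)
    thus ?thesis using False by simp
  qed
  have "bounded_clinear S" unfolding bounded_clinear_def
    using bounded_linear_intro[OF Sadd SR Sb] SC by blast
  thus ?thesis using S by blast
qed

lemma adj_prop:
  fixes T :: "'a::chilbert \<Rightarrow> 'a"
  assumes "bounded_clinear T"
  shows "bounded_clinear (adj T)" "\<And>x y. cinner (T x) y = cinner x (adj T y)"
proof -
  have "bounded_clinear (adj T) \<and> (\<forall>x y. cinner (T x) y = cinner x (adj T y))"
    unfolding adj_def by (rule someI_ex[OF adj_exists[OF assms]])
  thus "bounded_clinear (adj T)" "\<And>x y. cinner (T x) y = cinner x (adj T y)" by auto
qed


lemma amgm: "(p::real) * q \<le> (p^2 + q^2) / 2"
proof -
  have "0 \<le> (p - q)^2" by simp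
  hence "0 \<le> p^2 + q^2 - 2 * p * q" by (simp add: power2_diff)
  thus ?thesis by simp
qed

theorem mainTheorem3:
  fixes X Y :: "'a::chilbert \<Rightarrow> 'a" and \<alpha> \<beta> :: real and x :: 'a
  assumes "bounded_clinear X" and "bounded_clinear Y"
    and "0 \<le> \<alpha>" and "\<alpha> \<le> 1" and "0 \<le> \<beta>" and "\<beta> \<le> 1"
    and "norm x = 1"
  shows "cmod (cinner (X x) x * cinner (Y x) x)
    \<le> 1/4 * onorm (\<lambda>z. \<alpha> *\<^sub>R adj X (X z) + (1 - \<alpha>) *\<^sub>R X (adj X z)
                       + \<beta> *\<^sub>R adj Y (Y z) + (1 - \<beta>) *\<^sub>R Y (adj Y z))
      + 1/8 * onorm (\<lambda>z. adj X (X z) + Y (adj Y z))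
      + 1/4 * numrad (Y \<circ> X)"
proof -
  note cX = assms(1) and cY = assms(2) and nx = assms(7)
  define A where "A = adj X"
  define B where "B = adj Y"
  have bX: "bounded_linear X" using cX by (simp add: bounded_clinear_def)
  have bY: "bounded_linear Y" using cY by (simp add: bounded_clinear_def)
  have bA: "bounded_linear A" using adj_prop(1)[OF cX] by (simp add: A_def bounded_clinear_def)
  have bB: "bounded_linear B" using adj_prop(1)[OF cY] by (simp add: B_def bounded_clinear_def)
  have pX: "\<And>z w. cinner (X z) w = cinner z (A w)" using adj_prop(2)[OF cX] by (simp add: A_def)
  have pY: "\<And>z w. cinner (Y z) w = cinner z (B w)" using adj_prop(2)[OF cY] by (simp add: B_def)
  have AX: "Re (cinner (A (X z)) z) = (norm (X z))^2" for z
    by (metis Re_cinner_self cnj.sel(1) cinner_commute pX)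
  have XA: "Re (cinner (X (A z)) z) = (norm (A z))^2" for z
    by (simp add: pX Re_cinner_self)
  have BY: "Re (cinner (B (Y z)) z) = (norm (Y z))^2" for z
    by (metis Re_cinner_self cnj.sel(1) cinner_commute pY)
  have YB: "Re (cinner (Y (B z)) z) = (norm (B z))^2" for z
    by (simp add: pY Re_cinner_self)
  let ?a = "cinner (X x) x" and ?b = "cinner (Y x) x"
  have a1: "cmod ?a \<le> norm (X x)" using cauchy_schwarz[of "X x" x] nx by simp
  have a2: "cmod ?a \<le> norm (A x)" using cauchy_schwarz[of x "A x"] nx by (simp add: pX)
  have b1: "cmod ?b \<le> norm (Y x)" using cauchy_schwarz[of "Y x" x] nx by simp
  have b2: "cmod ?b \<le> norm (B x)" using cauchy_schwarz[of x "B x"] nx by (simp add: pY)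
  have sq: "p \<le> q \<Longrightarrow> p^2 \<le> q^2" if "0 \<le> p" for p q :: real using that by (simp add: power_mono)
  have a1': "(cmod ?a)^2 \<le> (norm (X x))^2" using a1 by (simp add: sq)
  have a2': "(cmod ?a)^2 \<le> (norm (A x))^2" using a2 by (simp add: sq)
  have b1': "(cmod ?b)^2 \<le> (norm (Y x))^2" using b1 by (simp add: sq)
  have b2': "(cmod ?b)^2 \<le> (norm (B x))^2" using b2 by (simp add: sq)
  have onb: "Re (cinner (f x) x) \<le> onorm f" if "bounded_linear f" for f :: "'a \<Rightarrow> 'a"
  proof -
    have "Re (cinner (f x) x) \<le> cmod (cinner (f x) x)" by (rule complex_Re_le_cmod)
    also have "\<dots> \<le> norm (f x) * norm x" by (rule cauchy_schwarz)
    also have "\<dots> \<le> onorm f" using onorm[OF that, of x] nx by simp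
    finally show ?thesis .
  qed
  define T where "T = (\<lambda>z. \<alpha> *\<^sub>R A (X z) + (1 - \<alpha>) *\<^sub>R X (A z) + \<beta> *\<^sub>R B (Y z) + (1 - \<beta>) *\<^sub>R Y (B z))"
  define S where "S = (\<lambda>z. A (X z) + Y (B z))"
  have bT: "bounded_linear T" unfolding T_def
    by (intro bounded_linear_add bounded_linear_const_scaleR bounded_linear_compose[OF bA bX]
        bounded_linear_compose[OF bX bA] bounded_linear_compose[OF bB bY] bounded_linear_compose[OF bY bB])
  have bS: "bounded_linear S" unfolding S_def
    by (intro bounded_linear_add bounded_linear_compose[OF bA bX] bounded_linear_compose[OF bY bB])
  have ReT: "Re (cinner (T x) x) = \<alpha> * (norm (X x))^2 + (1 - \<alpha>) * (norm (A x))^2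
      + \<beta> * (norm (Y x))^2 + (1 - \<beta>) * (norm (B x))^2"
    unfolding T_def by (simp add: cinner_add_left cinner_scaleR_left AX XA BY YB)
  have ReS: "Re (cinner (S x) x) = (norm (X x))^2 + (norm (B x))^2"
    unfolding S_def by (simp add: cinner_add_left AX YB)
  have T1: "(cmod ?a)^2 + (cmod ?b)^2 \<le> onorm T"
  proof -
    have "\<alpha> * (cmod ?a)^2 \<le> \<alpha> * (norm (X x))^2" using a1' assms(3) by (rule mult_left_mono)
    moreover have "(1 - \<alpha>) * (cmod ?a)^2 \<le> (1 - \<alpha>) * (norm (A x))^2" using a2' assms(4) by (simp add: mult_left_mono)
    moreover have "\<beta> * (cmod ?b)^2 \<le> \<beta> * (norm (Y x))^2" using b1' assms(5) by (rule mult_left_mono)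
    moreover have "(1 - \<beta>) * (cmod ?b)^2 \<le> (1 - \<beta>) * (norm (B x))^2" using b2' assms(6) by (simp add: mult_left_mono)
    ultimately have "(cmod ?a)^2 + (cmod ?b)^2 \<le> Re (cinner (T x) x)" unfolding ReT by (simp add: algebra_simps)
    also have "\<dots> \<le> onorm T" by (rule onb[OF bT])
    finally show ?thesis .
  qed
  have S1: "(norm (X x))^2 + (norm (B x))^2 \<le> onorm S" using onb[OF bS] ReS by simp
  have bYX: "bounded_linear (Y \<circ> X)" unfolding comp_def by (rule bounded_linear_compose[OF bY bX])
  have w: "cmod (cinner (X x) (B x)) \<le> numrad (Y \<circ> X)"
  proof -
    have "cinner (X x) (B x) = cinner ((Y \<circ> X) x) x" by (simp add: pY)
    moreover have "cmod (cinner ((Y \<circ> X) x) x) \<le> numrad (Y \<circ> X)"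
      unfolding numrad_def
    proof (rule cSUP_upper)
      show "x \<in> {x. norm x = 1}" using nx by simp
      show "bdd_above ((\<lambda>x. cmod (cinner ((Y \<circ> X) x) x)) ` {x. norm x = 1})"
      proof (rule bdd_aboveI2)
        fix z :: 'a assume "z \<in> {x. norm x = 1}"
        hence "norm z = 1" by simp
        have "cmod (cinner ((Y \<circ> X) z) z) \<le> norm ((Y \<circ> X) z) * norm z" by (rule cauchy_schwarz)
        also have "\<dots> \<le> onorm (Y \<circ> X)" using onorm[OF bYX, of z] \<open>norm z = 1\<close> by simp
        finally show "cmod (cinner ((Y \<circ> X) z) z) \<le> onorm (Y \<circ> X)" .
      qed
    qed
    ultimately show ?thesis by simp
  qed
  have buz: "cmod (?a * ?b) \<le> (norm (X x) * norm (B x) + cmod (cinner (X x) (B x))) / 2"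
    using buzano[OF nx, of "X x" "B x"] by (simp add: pY)
  have amgm1: "norm (X x) * norm (B x) \<le> ((norm (X x))^2 + (norm (B x))^2) / 2"
    by (rule amgm)
  have amgm2: "cmod (?a * ?b) \<le> ((cmod ?a)^2 + (cmod ?b)^2) / 2"
    unfolding norm_mult by (rule amgm)
  have "cmod (?a * ?b) \<le> onorm T / 2"
    using order_trans[OF amgm2 divide_right_mono[OF T1]] by simp
  hence "cmod (?a * ?b) \<le> 1/4 * onorm T + 1/8 * onorm S + 1/4 * numrad (Y \<circ> X)"
    using amgm1 buz S1 w by argo
  thus ?thesis unfolding T_def S_def A_def B_def .
qed

end
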